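(* Let $(\mathcal{X},d)$ be a finite metric space with at least two points, let $\mu,\nu\in\mathcal{M}_+(\mathcal{X})$, $p\ge 1$ and $C>0$. Fix a resolution $q>1$ and a depth $L\in\mathbb{N}$, and let $Q_0,\dots,Q_{L+1}$, the tree $\mathcal{T}$, the descendant sets $\mathcal{C}(\cdot)$ and the height function $h_{q,L}(k)=\frac{q^{1-k}-q^{-L}}{q-1}\mathrm{diam}(\mathcal{X})$ be as in the context. For $l\in\{1,\dots,L+1\}$ set $$B_{q,p,L,\mathcal{X}}(l)=2^{p-1}\sum_{j=l}^{L+1}\sum_{x\in Q_j}\big(h_{q,L}(j-1)^p-h_{q,L}(j)^p\big)\,\big|\mu^L(\mathcal{C}(x,j))-\nu^L(\mathcal{C}(x,j))\big|.$$ Then: (i) if $C\ge 2h_{q,L}(0)$, then $\mathrm{KR}^p_{p,C}(\mu,\nu)\le \big(\tfrac{C^p}{2}-2^{p-1}h_{q,L}(0)^p\big)|\mathbb{M}(\mu)-\mathbb{M}(\nu)|+B_{q,p,L,\mathcal{X}}(1)$; (ii) if $2h_{q,L}(l)\le C<2h_{q,L}(l-1)$ for some $l\in\{1,\dots,L\}$, then $\mathrm{KR}^p_{p,C}(\mu,\nu)\le B_{q,p,L,\mathcal{X}}(l)$; (iii) if $C\le \max\{2h_{q,L}(L),\ \min_{x\neq x'}d(x,x')\}$, then $\mathrm{KR}^p_{p,C}(\mu,\nu)\le \frac{C^p}{2}\mathrm{TV}(\mu,\nu)$, where $\mathrm{TV}(\mu,\nu)=\sum_{x\in\mathcal{X}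}|\mu(x)-\nu(x)|$.
   Context: $\mathcal{M}_+(\mathcal{X})$ is the set of non-negative measures on the finite set $\mathcal{X}$ (identified with vectors $(\mu(x))_{x\in\mathcal{X}}$), $\mathbb{M}(\mu)=\sum_x\mu(x)$ its total mass. For $\pi\in\mathcal{M}_+(\mathcal{X}\times\mathcal{X})$, marginals are $\pi(x,\mathcal{X})=\sum_{x'}\pi(x,x')$, $\pi(\mathcal{X},x')=\sum_x\pi(x,x')$. The set of sub-couplings is $\Pi_{\le}(\mu,\nu)=\{\pi\in\mathcal{M}_+(\mathcal{X}\times\mathcal{X}):\pi(x,\mathcal{X})\le\mu(x),\ \pi(\mathcal{X},x')\le\nu(x')\ \forall x,x'\}$. For $p\ge1$, $C>0$ the $(p,C)$-Kantorovich–Rubinstein distance is $$\mathrm{KR}_{p,C}(\mu,\nu)=\Big(\min_{\pi\in\Pi_\le(\mu,\nu)}\sum_{x,x'}d^p(x,x')\pi(x,x')+C^p\Big(\tfrac{\mathbb{M}(\mu)+\mathbb{M}(\nu)}{2}-\mathbb{M}(\pi)\Big)\Big)^{1/p}.$$ Tree construction: for $\epsilon>0$, an $\epsilon$-cover of $\mathcal{X}$ is a subset $S\subset\mathcal{X}$ such that every $x\in\mathcal{X}$ has $d(x,y)\le\epsilon$ for some $y\in S$. For $j=0,\dots,L$ let $Q_j\subset\mathcal{X}$ be a $q^{-j}\mathrm{diam}(\mathcal{X})$-cover of minimal cardinality (so $|Q_0|=1$), and $Q_{L+1}=\mathcal{X}$. The nodes of $\mathcal{T}$ are the pairs $(x,j)$,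 $x\in Q_j$, $j=0,\dots,L+1$; the root is the unique node of level $0$. Each node $(x',j+1)$ is joined by an edge to exactly one node $(x,j)$ with $d(x,x')\le q^{-j}\mathrm{diam}(\mathcal{X})$ (its parent; ties broken arbitrarily). A node at level $k$ has height $h_{q,L}(k)$, so leaves (level $L+1$, identified with the points of $\mathcal{X}$) have height $0$. For a node $v$, $\mathcal{C}(v)$ denotes the set of nodes whose path to the root passes through $v$ (including $v$). The measure $\mu^L$ is $\mu$ viewed as a measure on the leaves, so $\mu^L(\mathcal{C}(v))$ is the total $\mu$-mass of the points $x\in\mathcal{X}$ whose leaf $(x,L+1)$ descends from $v$; similarly $\nu^L$. *)

theory Defs
  imports Complex_Main
begin

definition finite_metric :: "'a set \<Rightarrow> ('a \<Rightarrow> 'a \<Rightarrow> real) \<Rightarrow> bool" where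
  "finite_metric X d \<longleftrightarrow> finite X \<and>
     (\<forall>x\<in>X. \<forall>y\<in>X. d x y \<ge> 0 \<and> (d x y = 0 \<longleftrightarrow> x = y) \<and> d x y = d y x) \<and>
     (\<forall>x\<in>X. \<forall>y\<in>X. \<forall>z\<in>X. d x z \<le> d x y + d y z)"

definition diam :: "'a set \<Rightarrow> ('a \<Rightarrow> 'a \<Rightarrow> real) \<Rightarrow> real" where
  "diam X d = Max {d x y | x y. x \<in> X \<and> y \<in> X}"

definition min_sep :: "'a set \<Rightarrow> ('a \<Rightarrow> 'a \<Rightarrow> real) \<Rightarrow> real" where
  "min_sep X d = Min {d x y | x y. x \<in> X \<and> y \<in> X \<and> x \<noteq> y}"

definition nonneg_measure :: "'a set \<Rightarrow> ('a \<Rightarrow> real) \<Rightarrow> bool" where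
  "nonneg_measure X \<mu> \<longleftrightarrow> (\<forall>x\<in>X. \<mu> x \<ge> 0)"

definition mass :: "'a set \<Rightarrow> ('a \<Rightarrow> real) \<Rightarrow> real" where
  "mass X \<mu> = (\<Sum>x\<in>X. \<mu> x)"

definition sub_coupling :: "'a set \<Rightarrow> ('a \<Rightarrow> real) \<Rightarrow> ('a \<Rightarrow> real) \<Rightarrow> ('a \<Rightarrow> 'a \<Rightarrow> real) \<Rightarrow> bool" where
  "sub_coupling X \<mu> \<nu> \<pi> \<longleftrightarrow>
     (\<forall>x\<in>X. \<forall>x'\<in>X. \<pi> x x' \<ge> 0) \<and>
     (\<forall>x\<in>X. (\<Sum>x'\<in>X. \<pi> x x') \<le> \<mu> x) \<and>
     (\<forall>x'\<in>X. (\<Sum>x\<in>X. \<pi> x x') \<le> \<nu> x')"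

definition KR_cost :: "'a set \<Rightarrow> ('a \<Rightarrow> 'a \<Rightarrow> real) \<Rightarrow> real \<Rightarrow> real \<Rightarrow>
    ('a \<Rightarrow> real) \<Rightarrow> ('a \<Rightarrow> real) \<Rightarrow> ('a \<Rightarrow> 'a \<Rightarrow> real) \<Rightarrow> real" where
  "KR_cost X d p C \<mu> \<nu> \<pi> =
     (\<Sum>x\<in>X. \<Sum>x'\<in>X. (d x x') powr p * \<pi> x x')
     + C powr p * ((mass X \<mu> + mass X \<nu>) / 2 - (\<Sum>x\<in>X. \<Sum>x'\<in>X. \<pi> x x'))"

text \<open>The (p,C)-Kantorovich--Rubinstein distance (the minimum is attained; we write it as Inf).\<close>
definition KR :: "'a set \<Rightarrow> ('a \<Rightarrow> 'a \<Rightarrow> real) \<Rightarrow> real \<Rightarrow> real \<Rightarrow>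
    ('a \<Rightarrow> real) \<Rightarrow> ('a \<Rightarrow> real) \<Rightarrow> real" where
  "KR X d p C \<mu> \<nu> = (Inf {KR_cost X d p C \<mu> \<nu> \<pi> | \<pi>. sub_coupling X \<mu> \<nu> \<pi>}) powr (1 / p)"

definition TV :: "'a set \<Rightarrow> ('a \<Rightarrow> real) \<Rightarrow> ('a \<Rightarrow> real) \<Rightarrow> real" where
  "TV X \<mu> \<nu> = (\<Sum>x\<in>X. \<bar>\<mu> x - \<nu> x\<bar>)"

definition is_cover :: "'a set \<Rightarrow> ('a \<Rightarrow> 'a \<Rightarrow> real) \<Rightarrow> real \<Rightarrow> 'a set \<Rightarrow> bool" where
  "is_cover X d \<epsilon> S \<longleftrightarrow> S \<subseteq> X \<and> (\<forall>x\<in>X. \<exists>y\<in>S. d x y \<le> \<epsilon>)"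

definition min_cover :: "'a set \<Rightarrow> ('a \<Rightarrow> 'a \<Rightarrow> real) \<Rightarrow> real \<Rightarrow> 'a set \<Rightarrow> bool" where
  "min_cover X d \<epsilon> S \<longleftrightarrow> is_cover X d \<epsilon> S \<and> (\<forall>S'. is_cover X d \<epsilon> S' \<longrightarrow> card S \<le> card S')"

text \<open>Tree construction: Q j is the set of centres at level j (j = 0..L+1), and
  par j x' is the (centre of the) parent at level j of the node (x', j+1).\<close>
definition valid_tree :: "'a set \<Rightarrow> ('a \<Rightarrow> 'a \<Rightarrow> real) \<Rightarrow> real \<Rightarrow> nat \<Rightarrow>
    (nat \<Rightarrow> 'a set) \<Rightarrow> (nat \<Rightarrow> 'a \<Rightarrow> 'a) \<Rightarrow> bool" where
  "valid_tree X d q L Q par \<longleftrightarrow>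
     (\<forall>j\<le>L. min_cover X d (q powr (- real j) * diam X d) (Q j)) \<and>
     Q (L + 1) = X \<and>
     (\<forall>j\<le>L. \<forall>x'\<in>Q (j + 1). par j x' \<in> Q j \<and> d (par j x') x' \<le> q powr (- real j) * diam X d)"

text \<open>anc_aux L par y m: the centre of the ancestor at level L+1-m of the leaf (y, L+1).\<close>
fun anc_aux :: "nat \<Rightarrow> (nat \<Rightarrow> 'a \<Rightarrow> 'a) \<Rightarrow> 'a \<Rightarrow> nat \<Rightarrow> 'a" where
  "anc_aux L par y 0 = y"
| "anc_aux L par y (Suc m) = par (L - m) (anc_aux L par y m)"

definition anc :: "nat \<Rightarrow> (nat \<Rightarrow> 'a \<Rightarrow> 'a) \<Rightarrow> nat \<Rightarrow> 'a \<Rightarrow> 'a" where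
  "anc L par j y = anc_aux L par y (L + 1 - j)"

text \<open>\<mu>^L(C(x,j)): mass of the leaves descending from the node (x,j).\<close>
definition subtree_mass :: "'a set \<Rightarrow> nat \<Rightarrow> (nat \<Rightarrow> 'a \<Rightarrow> 'a) \<Rightarrow> ('a \<Rightarrow> real) \<Rightarrow> nat \<Rightarrow> 'a \<Rightarrow> real" where
  "subtree_mass X L par \<mu> j x = (\<Sum>y\<in>{y\<in>X. anc L par j y = x}. \<mu> y)"

definition height :: "'a set \<Rightarrow> ('a \<Rightarrow> 'a \<Rightarrow> real) \<Rightarrow> real \<Rightarrow> nat \<Rightarrow> nat \<Rightarrow> real" where
  "height X d q L k = (q powr (1 - real k) - q powr (- real L)) / (q - 1) * diam X d"

definition Bterm :: "'a set \<Rightarrow> ('a \<Rightarrow> 'a \<Rightarrow> real) \<Rightarrow> real \<Rightarrow> real \<Rightarrow> nat \<Rightarrow>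
    (nat \<Rightarrow> 'a set) \<Rightarrow> (nat \<Rightarrow> 'a \<Rightarrow> 'a) \<Rightarrow> ('a \<Rightarrow> real) \<Rightarrow> ('a \<Rightarrow> real) \<Rightarrow> nat \<Rightarrow> real" where
  "Bterm X d q p L Q par \<mu> \<nu> l = 2 powr (p - 1) *
     (\<Sum>j=l..L+1. \<Sum>x\<in>Q j.
        (height X d q L (j - 1) powr p - height X d q L j powr p) *
        \<bar>subtree_mass X L par \<mu> j x - subtree_mass X L par \<nu> j x\<bar>)"

end

theory Submission
  imports Defs
begin

locale kr_setup =
  fixes X :: "'a set" and d :: "'a \<Rightarrow> 'a \<Rightarrow> real"
    and \<mu> \<nu> :: "'a \<Rightarrow> real" and p q :: real and L :: nat
    and Q :: "nat \<Rightarrow> 'a set" and par :: "nat \<Rightarrow> 'a \<Rightarrow> 'a"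
  assumes fm: "finite_metric X d" and cardX: "card X \<ge> 2"
    and nm: "nonneg_measure X \<mu>" and nn: "nonneg_measure X \<nu>"
    and p1: "p \<ge> 1" and q1: "q > 1"
    and vt: "valid_tree X d q L Q par"
begin

abbreviation "hh \<equiv> height X d q L"
abbreviation "gg \<equiv> anc L par"

lemma finX: "finite X" using fm unfolding finite_metric_def by auto
lemma d0: "x \<in> X \<Longrightarrow> d x x = 0" using fm unfolding finite_metric_def by auto
lemma dnn: "x \<in> X \<Longrightarrow> y \<in> X \<Longrightarrow> d x y \<ge> 0" using fm unfolding finite_metric_def by auto
lemma dsym: "x \<in> X \<Longrightarrow> y \<in> X \<Longrightarrow> d x y = d y x" using fm unfolding finite_metric_def by auto
lemma dtri: "x \<in> X \<Longrightarrow> y \<in> X \<Longrightarrow> z \<in> X \<Longrightarrow> d x z \<le> d x y + d y z"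
  using fm unfolding finite_metric_def by auto
lemma Xne: "X \<noteq> {}" using cardX by auto
lemma mu_nn: "x \<in> X \<Longrightarrow> \<mu> x \<ge> 0" using nm unfolding nonneg_measure_def by auto
lemma nu_nn: "x \<in> X \<Longrightarrow> \<nu> x \<ge> 0" using nn unfolding nonneg_measure_def by auto

lemma diam_ge: "x \<in> X \<Longrightarrow> y \<in> X \<Longrightarrow> d x y \<le> diam X d"
proof -
  assume a: "x \<in> X" "y \<in> X"
  have e: "{d x y | x y. x \<in> X \<and> y \<in> X} = (\<lambda>(x,y). d x y) ` (X \<times> X)" by auto
  show ?thesis unfolding diam_def e
    by (rule Max_ge) (use a finX in auto)
qed

lemma diam_nn: "diam X d \<ge> 0"
  using Xne diam_ge d0 by fastforce

lemma h_step: "hh k = hh (Suc k) + q powr (- real k) * diam X d"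
proof -
  have a: "q powr (1 - real k) = q * q powr (- real k)"
    using powr_add[of q 1 "- real k"] q1 by simp
  have b: "q powr (1 - real (Suc k)) = q powr (- real k)" by simp
  show ?thesis unfolding height_def a b using q1
    by (simp add: field_simps)
qed

lemma h_last: "hh (L+1) = 0"
  unfolding height_def by simp

lemma h_nn: "k \<le> L + 1 \<Longrightarrow> hh k \<ge> 0"
proof -
  assume k: "k \<le> L + 1"
  have "q powr (- real L) \<le> q powr (1 - real k)"
    using k q1 by (intro powr_mono) auto
  then show ?thesis unfolding height_def using q1 diam_nn by simp
qed

lemma Q_sub: "j \<le> L + 1 \<Longrightarrow> Q j \<subseteq> X"
  using vt unfolding valid_tree_def min_cover_def is_cover_def
  by (cases "j = L + 1") auto

lemma anc_aux_prop: "y \<in> X \<Longrightarrow> m \<le> L + 1 \<Longrightarrow>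
    anc_aux L par y m \<in> Q (L+1-m) \<and> d y (anc_aux L par y m) \<le> hh (L+1-m)"
proof (induction m)
  case 0
  then show ?case using vt d0 h_last unfolding valid_tree_def by simp
next
  case (Suc m)
  then have m: "m \<le> L" and IH: "anc_aux L par y m \<in> Q (L-m+1)" "d y (anc_aux L par y m) \<le> hh (L-m+1)"
    by (auto simp: Suc_diff_le)
  define z where "z = anc_aux L par y m"
  have vt3: "\<And>j x'. j \<le> L \<Longrightarrow> x' \<in> Q (j+1) \<Longrightarrow> par j x' \<in> Q j \<and> d (par j x') x' \<le> q powr (- real j) * diam X d"
    using vt unfolding valid_tree_def by blast
  have zX: "z \<in> X" using Q_sub[of "L-m+1"] IH z_def by auto
  have pz: "par (L-m) z \<in> Q (L-m)" "d (par (L-m) z) z \<le> q powr (- real (L-m)) * diam X d"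
    using vt3[of "L-m" z] IH m unfolding z_def by auto
  have "L - m \<le> L + 1" by simp
  then have pX: "par (L-m) z \<in> X" using Q_sub[of "L-m"] pz(1) by blast
  have "d y (par (L-m) z) \<le> d y z + d z (par (L-m) z)" using dtri Suc.prems zX pX by blast
  also have "\<dots> \<le> hh (L-m+1) + q powr (- real (L-m)) * diam X d"
    using IH pz dsym[OF zX pX] z_def by auto
  also have "\<dots> = hh (L-m)" using h_step[of "L-m"] by simp
  finally have "d y (par (L-m) z) \<le> hh (L-m)" .
  moreover have "L + 1 - Suc m = L - m" using m by simp
  ultimately show ?case using pz z_def by simp
qed

lemma anc_Q: "y \<in> X \<Longrightarrow> j \<le> L+1 \<Longrightarrow> gg j y \<in> Q j"
  using anc_aux_prop[of y "L+1-j"] unfolding anc_def by simp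

lemma anc_d: "y \<in> X \<Longrightarrow> j \<le> L+1 \<Longrightarrow> d y (gg j y) \<le> hh j"
  using anc_aux_prop[of y "L+1-j"] unfolding anc_def by simp

lemma anc_X: "y \<in> X \<Longrightarrow> j \<le> L+1 \<Longrightarrow> gg j y \<in> X"
  using anc_Q Q_sub by blast

lemma anc_last: "gg (L+1) y = y"
  unfolding anc_def by simp

lemma anc_par: "j \<le> L \<Longrightarrow> gg j y = par j (gg (Suc j) y)"
proof -
  assume j: "j \<le> L"
  have "L + 1 - j = Suc (L + 1 - Suc j)" using j by simp
  moreover have "L - (L + 1 - Suc j) = j" using j by simp
  ultimately show ?thesis unfolding anc_def by simp
qed

lemma d_block: "x \<in> X \<Longrightarrow> y \<in> X \<Longrightarrow> j \<le> L+1 \<Longrightarrow> gg j x = gg j y \<Longrightarrow> d x y \<le> 2 * hh j"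
proof -
  assume a: "x \<in> X" "y \<in> X" "j \<le> L+1" "gg j x = gg j y"
  have "d x y \<le> d x (gg j x) + d (gg j x) y" using dtri a anc_X by blast
  also have "d (gg j x) y = d y (gg j y)" using a dsym anc_X by metis
  finally show ?thesis using anc_d[of x j] anc_d[of y j] a by linarith
qed

lemma partition: "j \<le> L+1 \<Longrightarrow> (\<Sum>x\<in>X. f x) = (\<Sum>z\<in>Q j. \<Sum>x\<in>{x\<in>X. gg j x = z}. f x)"
proof -
  assume j: "j \<le> L+1"
  have fQ: "finite (Q j)" using Q_sub[OF j] finX finite_subset by blast
  show ?thesis
    by (rule sum.group[symmetric, OF finX fQ]) (use anc_Q j in auto)
qed

definition rs :: "('a \<Rightarrow> 'a \<Rightarrow> real) \<Rightarrow> 'a \<Rightarrow> real" where "rs \<pi> x = (\<Sum>y\<in>X. \<pi> x y)"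
definition cs :: "('a \<Rightarrow> 'a \<Rightarrow> real) \<Rightarrow> 'a \<Rightarrow> real" where "cs \<pi> y = (\<Sum>x\<in>X. \<pi> x y)"
definition cost :: "('a \<Rightarrow> 'a \<Rightarrow> real) \<Rightarrow> real" where
  "cost \<pi> = (\<Sum>x\<in>X. \<Sum>y\<in>X. d x y powr p * \<pi> x y)"
definition UU :: "('a \<Rightarrow> 'a \<Rightarrow> real) \<Rightarrow> real" where
  "UU \<pi> = (\<Sum>x\<in>X. (\<mu> x - rs \<pi> x) + (\<nu> x - cs \<pi> x))"
definition cc :: real where "cc = 2 powr (p - 1)"
definition Inv :: "nat \<Rightarrow> ('a \<Rightarrow> 'a \<Rightarrow> real) \<Rightarrow> bool" where
  "Inv j \<pi> \<longleftrightarrow>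
  (\<forall>x\<in>X. \<forall>y\<in>X. \<pi> x y \<ge> 0) \<and> (\<forall>x\<in>X. rs \<pi> x \<le> \<mu> x) \<and> (\<forall>y\<in>X. cs \<pi> y \<le> \<nu> y) \<and>
  (\<forall>x\<in>X. \<forall>y\<in>X. \<pi> x y \<noteq> 0 \<longrightarrow> gg j x = gg j y) \<and>
  (\<forall>z\<in>Q j. (\<Sum>x\<in>{x\<in>X. gg j x = z}. \<mu> x - rs \<pi> x) = 0 \<or> (\<Sum>x\<in>{x\<in>X. gg j x = z}. \<nu> x - cs \<pi> x) = 0) \<and>
  cost \<pi> + cc * hh j powr p * UU \<pi> \<le> Bterm X d q p L Q par \<mu> \<nu> (j+1)"

lemma UU_eq:
  assumes I: "Inv j \<pi>" and j: "j \<le> L + 1"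
  shows "UU \<pi> = (\<Sum>z\<in>Q j. \<bar>subtree_mass X L par \<mu> j z - subtree_mass X L par \<nu> j z\<bar>)"
proof -
  let ?S = "\<lambda>z. {x\<in>X. gg j x = z}"
  have blk: "(\<Sum>x\<in>?S z. (\<mu> x - rs \<pi> x) + (\<nu> x - cs \<pi> x)) =
      \<bar>subtree_mass X L par \<mu> j z - subtree_mass X L par \<nu> j z\<bar>" if z: "z \<in> Q j" for z
  proof -
    have fS: "finite (?S z)" using finX by auto
    have sup: "\<And>x y. x \<in> X \<Longrightarrow> y \<in> X \<Longrightarrow> \<pi> x y \<noteq> 0 \<Longrightarrow> gg j x = gg j y"
      using I unfolding Inv_def by blast
    have r: "rs \<pi> x = (\<Sum>y\<in>?S z. \<pi> x y)" if x: "x \<in> ?S z" for x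
    proof -
    have zero: "\<forall>i\<in>X - ?S z. \<pi> x i = 0"
    proof
      fix i assume i: "i \<in> X - ?S z"
      show "\<pi> x i = 0"
      proof (rule ccontr)
        assume "\<pi> x i \<noteq> 0" then have "gg j x = gg j i" using sup[of x i] x i by auto
        then show False using i x by auto
      qed
    qed
      show ?thesis unfolding rs_def
        by (rule sum.mono_neutral_right[OF finX _ zero]) auto
    qed
    have c: "cs \<pi> y = (\<Sum>x\<in>?S z. \<pi> x y)" if y: "y \<in> ?S z" for y
    proof -
    have zero: "\<forall>i\<in>X - ?S z. \<pi> i y = 0"
    proof
      fix i assume i: "i \<in> X - ?S z"
      show "\<pi> i y = 0"
      proof (rule ccontr)
        assume "\<pi> i y \<noteq> 0" then have "gg j i = gg j y" using sup[of i y] y i by auto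
        then show False using i y by auto
      qed
    qed
      show ?thesis unfolding cs_def
        by (rule sum.mono_neutral_right[OF finX _ zero]) auto
    qed
    have rc: "(\<Sum>x\<in>?S z. rs \<pi> x) = (\<Sum>x\<in>?S z. cs \<pi> x)"
    proof -
      have "(\<Sum>x\<in>?S z. rs \<pi> x) = (\<Sum>x\<in>?S z. \<Sum>y\<in>?S z. \<pi> x y)"
        by (rule sum.cong[OF refl r])
      also have "\<dots> = (\<Sum>y\<in>?S z. \<Sum>x\<in>?S z. \<pi> x y)" by (rule sum.swap)
      also have "\<dots> = (\<Sum>x\<in>?S z. cs \<pi> x)" by (rule sum.cong[OF refl c, symmetric])
      finally show ?thesis .
    qed
    define A where "A = (\<Sum>x\<in>?S z. \<mu> x - rs \<pi> x)"
    define B where "B = (\<Sum>x\<in>?S z. \<nu> x - cs \<pi> x)"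
    have A0: "A \<ge> 0" unfolding A_def using I unfolding Inv_def by (intro sum_nonneg) auto
    have B0: "B \<ge> 0" unfolding B_def using I unfolding Inv_def by (intro sum_nonneg) auto
    have AB: "A = 0 \<or> B = 0" using I z unfolding Inv_def A_def B_def by blast
    have "A - B = subtree_mass X L par \<mu> j z - subtree_mass X L par \<nu> j z"
      unfolding A_def B_def subtree_mass_def sum_subtractf using rc by simp
    moreover have "(\<Sum>x\<in>?S z. (\<mu> x - rs \<pi> x) + (\<nu> x - cs \<pi> x)) = A + B"
      unfolding A_def B_def sum.distrib ..
    ultimately show ?thesis using A0 B0 AB by auto
  qed
  have "UU \<pi> = (\<Sum>z\<in>Q j. \<Sum>x\<in>?S z. (\<mu> x - rs \<pi> x) + (\<nu> x - cs \<pi> x))"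
    unfolding UU_def by (rule partition[OF j])
  also have "\<dots> = (\<Sum>z\<in>Q j. \<bar>subtree_mass X L par \<mu> j z - subtree_mass X L par \<nu> j z\<bar>)"
    using blk by (rule sum.cong[OF refl])
  finally show ?thesis .
qed

lemma UU_nn: "Inv j \<pi> \<Longrightarrow> UU \<pi> \<ge> 0"
  unfolding UU_def Inv_def by (intro sum_nonneg) (smt (verit))

lemma L1:
  assumes I: "Inv j \<pi>" and j: "1 \<le> j" "j \<le> L + 1"
  shows "cost \<pi> + cc * hh (j-1) powr p * UU \<pi> \<le> Bterm X d q p L Q par \<mu> \<nu> j"
proof -
  define F where "F k = (\<Sum>x\<in>Q k. (hh (k - 1) powr p - hh k powr p) *
        \<bar>subtree_mass X L par \<mu> k x - subtree_mass X L par \<nu> k x\<bar>)" for k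
  have B: "Bterm X d q p L Q par \<mu> \<nu> j = cc * F j + Bterm X d q p L Q par \<mu> \<nu> (j+1)"
  proof -
    have s: "(\<Sum>k=j..L+1. G k) = G j + (\<Sum>k=j+1..L+1. G k)" for G :: "nat \<Rightarrow> real"
      by (rule sum.atLeast_Suc_atMost[OF j(2), of G, unfolded Suc_eq_plus1])
    show ?thesis by (simp only: Bterm_def F_def cc_def s distrib_left)
  qed
  have Fe: "F j = (hh (j - 1) powr p - hh j powr p) * UU \<pi>"
    unfolding F_def UU_eq[OF I j(2)] sum_distrib_left ..
  have e: "cc * hh (j-1) powr p * UU \<pi> = cc * F j + cc * hh j powr p * UU \<pi>"
    unfolding Fe by (simp add: algebra_simps)
  moreover have "cost \<pi> + cc * hh j powr p * UU \<pi> \<le> Bterm X d q p L Q par \<mu> \<nu> (j+1)"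
    using I unfolding Inv_def by blast
  ultimately show ?thesis unfolding B e by linarith
qed

lemma two_cc: "(2 * x) powr p = 2 * cc * x powr p"
proof -
  have "(2::real) powr p = 2 powr (1 + (p - 1))" by simp
  also have "\<dots> = 2 * cc" unfolding powr_add cc_def by simp
  finally show ?thesis by (simp add: powr_mult)
qed

definition pi0 :: "'a \<Rightarrow> 'a \<Rightarrow> real" where
  "pi0 x y = (if x = y then min (\<mu> x) (\<nu> x) else 0)"

lemma rs_pi0: "x \<in> X \<Longrightarrow> rs pi0 x = min (\<mu> x) (\<nu> x)"
  unfolding rs_def pi0_def using finX by simp
lemma cs_pi0: "x \<in> X \<Longrightarrow> cs pi0 x = min (\<mu> x) (\<nu> x)"
  unfolding cs_def pi0_def using finX by simp

lemma UU_pi0: "UU pi0 = TV X \<mu> \<nu>"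
  unfolding UU_def TV_def by (rule sum.cong) (auto simp: rs_pi0 cs_pi0)

lemma cost_pi0: "cost pi0 = 0"
    unfolding cost_def pi0_def using d0 p1 by (intro sum.neutral ballI) auto

lemma base: "Inv (L+1) pi0"
proof -
  have c0: "cost pi0 = 0" by (rule cost_pi0)
  have B0: "Bterm X d q p L Q par \<mu> \<nu> (L+1+1) = 0" unfolding Bterm_def by simp
  have blk: "(\<Sum>x\<in>{x\<in>X. gg (L+1) x = z}. \<mu> x - rs pi0 x) = 0 \<or>
             (\<Sum>x\<in>{x\<in>X. gg (L+1) x = z}. \<nu> x - cs pi0 x) = 0" if z: "z \<in> Q (L+1)" for z
  proof -
    have zX: "z \<in> X" using z vt unfolding valid_tree_def by auto
    have "{x\<in>X. gg (L+1) x = z} = {z}" using zX anc_last by auto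
    then show ?thesis using zX rs_pi0 cs_pi0 by auto
  qed
  show ?thesis unfolding Inv_def
    using blk c0 B0 h_last p1 rs_pi0 cs_pi0 mu_nn nu_nn
    by (auto simp: pi0_def)
qed

lemma step:
  assumes I: "Inv (Suc j) \<pi>" and j: "j \<le> L"
  shows "\<exists>\<pi>'. Inv j \<pi>'"
proof -
  define a where "a x = \<mu> x - rs \<pi> x" for x
  define b where "b x = \<nu> x - cs \<pi> x" for x
  define A where "A z = (\<Sum>x\<in>{x\<in>X. gg j x = z}. a x)" for z
  define B where "B z = (\<Sum>x\<in>{x\<in>X. gg j x = z}. b x)" for z
  define M where "M z = max (A z) (B z)" for z
  define \<tau> where "\<tau> x y = (if gg j x = gg j y then a x * b y / M (gg j x) else 0)" for x y
  define \<pi>' where "\<pi>' x y = \<pi> x y + \<tau> x y" for x y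
  have a0: "x \<in> X \<Longrightarrow> a x \<ge> 0" for x using I unfolding Inv_def a_def by auto
  have b0: "x \<in> X \<Longrightarrow> b x \<ge> 0" for x using I unfolding Inv_def b_def by auto
  have A0: "A z \<ge> 0" for z unfolding A_def using a0 by (intro sum_nonneg) auto
  have B0: "B z \<ge> 0" for z unfolding B_def using b0 by (intro sum_nonneg) auto
  have M0: "M z \<ge> 0" for z unfolding M_def using A0 by (simp add: le_max_iff_disj)
  have BM: "B z / M z \<le> 1" for z
    using B0[of z] A0[of z] unfolding M_def by (cases "max (A z) (B z) = 0") (auto simp: divide_le_eq_1)
  have AM: "A z / M z \<le> 1" for z
    using B0[of z] A0[of z] unfolding M_def by (cases "max (A z) (B z) = 0") (auto simp: divide_le_eq_1)
  have tau0: "x \<in> X \<Longrightarrow> y \<in> X \<Longrightarrow> \<tau> x y \<ge> 0" for x y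
    unfolding \<tau>_def using a0 b0 M0 by simp
  have rs_tau: "(\<Sum>y\<in>X. \<tau> x y) = a x * (B (gg j x) / M (gg j x))" for x
  proof -
    have "(\<Sum>y\<in>X. \<tau> x y) = (\<Sum>y\<in>{y\<in>X. gg j y = gg j x}. a x * b y / M (gg j x))"
      unfolding \<tau>_def sum.inter_filter[OF finX] by (rule sum.cong) auto
    also have "\<dots> = (\<Sum>y\<in>{y\<in>X. gg j y = gg j x}. a x * b y) / M (gg j x)"
      by (rule sum_divide_distrib[symmetric])
    also have "\<dots> = a x * (B (gg j x) / M (gg j x))"
      unfolding B_def by (simp add: sum_distrib_left)
    finally show ?thesis .
  qed
  have cs_tau: "(\<Sum>x\<in>X. \<tau> x y) = b y * (A (gg j y) / M (gg j y))" for y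
  proof -
    have "(\<Sum>x\<in>X. \<tau> x y) = (\<Sum>x\<in>{x\<in>X. gg j x = gg j y}. a x * b y / M (gg j y))"
      unfolding \<tau>_def sum.inter_filter[OF finX] by (rule sum.cong) auto
    also have "\<dots> = (\<Sum>x\<in>{x\<in>X. gg j x = gg j y}. a x * b y) / M (gg j y)"
      by (rule sum_divide_distrib[symmetric])
    also have "\<dots> = b y * (A (gg j y) / M (gg j y))"
      unfolding A_def sum_distrib_right[symmetric] by (simp add: mult.commute)
    finally show ?thesis .
  qed
  have rs': "rs \<pi>' x = rs \<pi> x + (\<Sum>y\<in>X. \<tau> x y)" for x
    unfolding rs_def \<pi>'_def sum.distrib ..
  have cs': "cs \<pi>' y = cs \<pi> y + (\<Sum>x\<in>X. \<tau> x y)" for y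
    unfolding cs_def \<pi>'_def sum.distrib ..
  have ra': "\<mu> x - rs \<pi>' x = a x * (1 - B (gg j x) / M (gg j x))" for x
    unfolding rs' rs_tau a_def by (simp add: algebra_simps)
  have rb': "\<nu> x - cs \<pi>' x = b x * (1 - A (gg j x) / M (gg j x))" for x
    unfolding cs' cs_tau b_def by (simp add: algebra_simps)
  have i1: "\<forall>x\<in>X. \<forall>y\<in>X. \<pi>' x y \<ge> 0"
    using I tau0 unfolding Inv_def \<pi>'_def by (simp add: add_nonneg_nonneg)
  have i2: "\<forall>x\<in>X. rs \<pi>' x \<le> \<mu> x"
  proof
    fix x assume x: "x \<in> X"
    have "0 \<le> a x * (1 - B (gg j x) / M (gg j x))" using a0[OF x] BM by simp
    then show "rs \<pi>' x \<le> \<mu> x" using ra'[of x] by linarith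
  qed
  have i3: "\<forall>x\<in>X. cs \<pi>' x \<le> \<nu> x"
  proof
    fix x assume x: "x \<in> X"
    have "0 \<le> b x * (1 - A (gg j x) / M (gg j x))" using b0[OF x] AM by simp
    then show "cs \<pi>' x \<le> \<nu> x" using rb'[of x] by linarith
  qed
  have i4: "\<forall>x\<in>X. \<forall>y\<in>X. \<pi>' x y \<noteq> 0 \<longrightarrow> gg j x = gg j y"
  proof (intro ballI impI)
    fix x y assume xy: "x \<in> X" "y \<in> X" "\<pi>' x y \<noteq> 0"
    show "gg j x = gg j y"
    proof (cases "\<pi> x y = 0")
      case True
      then have "\<tau> x y \<noteq> 0" using xy unfolding \<pi>'_def by simp
      then show ?thesis unfolding \<tau>_def by (auto split: if_splits)
    next
      case False
      then have "gg (Suc j) x = gg (Suc j) y" using I xy unfolding Inv_def by auto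
      then show ?thesis using anc_par[OF j] by metis
    qed
  qed
  have i5: "\<forall>z\<in>Q j. (\<Sum>x\<in>{x\<in>X. gg j x = z}. \<mu> x - rs \<pi>' x) = 0 \<or>
                     (\<Sum>x\<in>{x\<in>X. gg j x = z}. \<nu> x - cs \<pi>' x) = 0"
  proof
    fix z assume z: "z \<in> Q j"
    have e1: "(\<Sum>x\<in>{x\<in>X. gg j x = z}. \<mu> x - rs \<pi>' x) = A z * (1 - B z / M z)"
      unfolding A_def sum_distrib_right by (rule sum.cong) (auto simp: ra')
    have e2: "(\<Sum>x\<in>{x\<in>X. gg j x = z}. \<nu> x - cs \<pi>' x) = B z * (1 - A z / M z)"
      unfolding B_def sum_distrib_right by (rule sum.cong) (auto simp: rb')
    show "(\<Sum>x\<in>{x\<in>X. gg j x = z}. \<mu> x - rs \<pi>' x) = 0 \<or>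
                     (\<Sum>x\<in>{x\<in>X. gg j x = z}. \<nu> x - cs \<pi>' x) = 0"
      unfolding e1 e2 using A0[of z] B0[of z] unfolding M_def
      by (cases "A z \<le> B z") (auto simp: max_def)
  qed
  define T where "T = (\<Sum>x\<in>X. \<Sum>y\<in>X. \<tau> x y)"
  have hj: "hh j \<ge> 0" using h_nn j by simp
  have cost': "cost \<pi>' \<le> cost \<pi> + 2 * cc * hh j powr p * T"
  proof -
    have "cost \<pi>' = cost \<pi> + (\<Sum>x\<in>X. \<Sum>y\<in>X. d x y powr p * \<tau> x y)"
      unfolding cost_def \<pi>'_def distrib_left sum.distrib ..
    also have "(\<Sum>x\<in>X. \<Sum>y\<in>X. d x y powr p * \<tau> x y) \<le> (\<Sum>x\<in>X. \<Sum>y\<in>X. (2 * hh j) powr p * \<tau> x y)"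
    proof (intro sum_mono)
      fix x y assume x: "x \<in> X" and y: "y \<in> X"
      show "d x y powr p * \<tau> x y \<le> (2 * hh j) powr p * \<tau> x y"
      proof (cases "gg j x = gg j y")
        case True
        have "d x y \<le> 2 * hh j" using d_block[OF x y _ True] j by simp
        then have "d x y powr p \<le> (2 * hh j) powr p" using p1 dnn[OF x y] by (intro powr_mono2) auto
        then show ?thesis using tau0[OF x y] by (rule mult_right_mono)
      next
        case False then show ?thesis unfolding \<tau>_def by simp
      qed
    qed
    also have "(\<Sum>x\<in>X. \<Sum>y\<in>X. (2 * hh j) powr p * \<tau> x y) = 2 * cc * hh j powr p * T"
      unfolding T_def sum_distrib_left two_cc ..
    finally show ?thesis by simp
  qed
  have UU': "UU \<pi>' = UU \<pi> - 2 * T"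
  proof -
    have sw: "(\<Sum>x\<in>X. \<Sum>y\<in>X. \<tau> y x) = T" unfolding T_def by (rule sum.swap)
    have "UU \<pi>' = (\<Sum>x\<in>X. ((\<mu> x - rs \<pi> x) + (\<nu> x - cs \<pi> x)) - (\<Sum>y\<in>X. \<tau> x y) - (\<Sum>y\<in>X. \<tau> y x))"
      unfolding UU_def rs' cs' by (rule sum.cong) auto
    also have "\<dots> = UU \<pi> - T - T"
      unfolding sum_subtractf UU_def sw T_def ..
    finally show ?thesis by simp
  qed
  have "cost \<pi>' + cc * hh j powr p * UU \<pi>' \<le> cost \<pi> + cc * hh j powr p * UU \<pi>"
    using cost' unfolding UU' by (simp add: algebra_simps)
  also have "\<dots> \<le> Bterm X d q p L Q par \<mu> \<nu> (j+1)"
    using L1[OF I] j by simp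
  finally have i6: "cost \<pi>' + cc * hh j powr p * UU \<pi>' \<le> Bterm X d q p L Q par \<mu> \<nu> (j+1)" .
  show ?thesis unfolding Inv_def using i1 i2 i3 i4 i5 i6 by blast
qed

lemma all_levels: "i \<le> L + 1 \<Longrightarrow> \<exists>\<pi>. Inv (L + 1 - i) \<pi>"
proof (induction i)
  case 0 then show ?case using base by auto
next
  case (Suc i)
  then obtain \<pi> where "Inv (L + 1 - i) \<pi>" by auto
  moreover have "L + 1 - i = Suc (L - i)" using Suc.prems by simp
  ultimately have "Inv (Suc (L - i)) \<pi>" by simp
  then obtain \<pi>' where "Inv (L - i) \<pi>'" using step[of "L - i" \<pi>] by auto
  then show ?case by auto
qed

lemma KR_le:
  assumes C: "C > 0" and I: "Inv j \<pi>"
  shows "KR X d p C \<mu> \<nu> powr p \<le> cost \<pi> + C powr p / 2 * UU \<pi>"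
proof -
  define S where "S = {KR_cost X d p C \<mu> \<nu> \<sigma> | \<sigma>. sub_coupling X \<mu> \<nu> \<sigma>}"
  have sc: "sub_coupling X \<mu> \<nu> \<pi>" using I unfolding Inv_def sub_coupling_def rs_def cs_def by auto
  have sw: "(\<Sum>x\<in>X. cs \<pi> x) = (\<Sum>x\<in>X. \<Sum>y\<in>X. \<pi> x y)" unfolding cs_def by (rule sum.swap[symmetric])
  have "UU \<pi> = mass X \<mu> + mass X \<nu> - 2 * (\<Sum>x\<in>X. \<Sum>y\<in>X. \<pi> x y)"
    unfolding UU_def mass_def sum.distrib sum_subtractf sw by (simp add: rs_def)
  then have e: "(mass X \<mu> + mass X \<nu>) / 2 - (\<Sum>x\<in>X. \<Sum>y\<in>X. \<pi> x y) = UU \<pi> / 2" by simp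
  have kc: "KR_cost X d p C \<mu> \<nu> \<pi> = cost \<pi> + C powr p / 2 * UU \<pi>"
    unfolding KR_cost_def cost_def e by simp
  have lb: "0 \<le> c" if "c \<in> S" for c
  proof -
    from that obtain \<sigma> where c: "c = KR_cost X d p C \<mu> \<nu> \<sigma>" and s: "sub_coupling X \<mu> \<nu> \<sigma>"
      unfolding S_def by auto
    have s1: "(\<Sum>x\<in>X. \<Sum>y\<in>X. \<sigma> x y) \<le> mass X \<mu>"
      unfolding mass_def using s unfolding sub_coupling_def by (intro sum_mono) auto
    have "(\<Sum>x\<in>X. \<Sum>y\<in>X. \<sigma> x y) = (\<Sum>y\<in>X. \<Sum>x\<in>X. \<sigma> x y)" by (rule sum.swap)
    also have "\<dots> \<le> mass X \<nu>"
      unfolding mass_def using s unfolding sub_coupling_def by (intro sum_mono) auto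
    finally have s2: "(\<Sum>x\<in>X. \<Sum>y\<in>X. \<sigma> x y) \<le> mass X \<nu>" .
    have c0: "0 \<le> (\<Sum>x\<in>X. \<Sum>y\<in>X. d x y powr p * \<sigma> x y)"
      using s unfolding sub_coupling_def by (intro sum_nonneg) auto
    have "0 \<le> C powr p * ((mass X \<mu> + mass X \<nu>) / 2 - (\<Sum>x\<in>X. \<Sum>y\<in>X. \<sigma> x y))"
      using s1 s2 by (intro mult_nonneg_nonneg) auto
    then show ?thesis unfolding c KR_cost_def using c0 by linarith
  qed
  have inS: "KR_cost X d p C \<mu> \<nu> \<pi> \<in> S" unfolding S_def using sc by auto
  have bdd: "bdd_below S" using lb by (intro bdd_belowI) auto
  have i1: "Inf S \<le> KR_cost X d p C \<mu> \<nu> \<pi>" by (rule cInf_lower[OF inS bdd])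
  have i0: "0 \<le> Inf S" using inS lb by (intro cInf_greatest) auto
  have "KR X d p C \<mu> \<nu> powr p = Inf S"
    unfolding KR_def S_def[symmetric] powr_powr using p1 i0 by simp
  then show ?thesis using i1 kc by simp
qed

lemma Q0_single: "\<exists>r. Q 0 = {r}"
proof -
  obtain x0 where x0: "x0 \<in> X" using Xne by auto
  have "min_cover X d (q powr (- real 0) * diam X d) (Q 0)" using vt unfolding valid_tree_def by blast
  then have mc: "min_cover X d (diam X d) (Q 0)" using q1 by simp
  have "is_cover X d (diam X d) {x0}" unfolding is_cover_def using x0 diam_ge by auto
  then have c1: "card (Q 0) \<le> 1" using mc unfolding min_cover_def by fastforce
  have sub: "Q 0 \<subseteq> X" and cov: "\<forall>x\<in>X. \<exists>y\<in>Q 0. d x y \<le> diam X d"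
    using mc unfolding min_cover_def is_cover_def by auto
  have fin: "finite (Q 0)" using sub finX finite_subset by blast
  have ne: "Q 0 \<noteq> {}" using cov x0 by auto
  have "card (Q 0) = 1" using c1 ne fin card_0_eq by fastforce
  then show ?thesis by (rule card_1_singletonE) auto
qed

lemma UU_root: "Inv 0 \<pi> \<Longrightarrow> UU \<pi> = \<bar>mass X \<mu> - mass X \<nu>\<bar>"
proof -
  assume I: "Inv 0 \<pi>"
  obtain r where r: "Q 0 = {r}" using Q0_single by auto
  have "{x\<in>X. gg 0 x = r} = X" using anc_Q[of _ 0] r by auto
  then show ?thesis unfolding UU_eq[OF I, simplified] r subtree_mass_def mass_def by simp
qed

end

theorem lemma2p1:
  fixes X :: "'a set" and d :: "'a \<Rightarrow> 'a \<Rightarrow> real"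
    and \<mu> \<nu> :: "'a \<Rightarrow> real" and p C q :: real and L :: nat
    and Q :: "nat \<Rightarrow> 'a set" and par :: "nat \<Rightarrow> 'a \<Rightarrow> 'a"
  assumes "finite_metric X d" and "card X \<ge> 2"
    and "nonneg_measure X \<mu>" and "nonneg_measure X \<nu>"
    and "p \<ge> 1" and "C > 0" and "q > 1"
    and "valid_tree X d q L Q par"
  shows "(C \<ge> 2 * height X d q L 0 \<longrightarrow>
            KR X d p C \<mu> \<nu> powr p \<le>
              (C powr p / 2 - 2 powr (p - 1) * height X d q L 0 powr p)
                * \<bar>mass X \<mu> - mass X \<nu>\<bar>
              + Bterm X d q p L Q par \<mu> \<nu> 1)
       \<and> (\<forall>l\<in>{1..L}. 2 * height X d q L l \<le> C \<and> C < 2 * height X d q L (l - 1) \<longrightarrow>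
            KR X d p C \<mu> \<nu> powr p \<le> Bterm X d q p L Q par \<mu> \<nu> l)
       \<and> (C \<le> max (2 * height X d q L L) (min_sep X d) \<longrightarrow>
            KR X d p C \<mu> \<nu> powr p \<le> C powr p / 2 * TV X \<mu> \<nu>)"
proof -
  interpret K: kr_setup X d \<mu> \<nu> p q L Q par
    by (rule kr_setup.intro) (use assms in auto)
  have p0: "p \<ge> 0" using assms by simp
  have P1: "C \<ge> 2 * height X d q L 0 \<longrightarrow>
            KR X d p C \<mu> \<nu> powr p \<le>
              (C powr p / 2 - 2 powr (p - 1) * height X d q L 0 powr p)
                * \<bar>mass X \<mu> - mass X \<nu>\<bar>
              + Bterm X d q p L Q par \<mu> \<nu> 1"
  proof
    obtain \<pi> where I: "K.Inv 0 \<pi>" using K.all_levels[of "L+1"] by auto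
    have a: "KR X d p C \<mu> \<nu> powr p \<le> K.cost \<pi> + C powr p / 2 * K.UU \<pi>"
      by (rule K.KR_le[OF assms(6) I])
    have b: "K.cost \<pi> + K.cc * height X d q L 0 powr p * K.UU \<pi> \<le> Bterm X d q p L Q par \<mu> \<nu> 1"
      using I unfolding K.Inv_def by simp
    have u: "K.UU \<pi> = \<bar>mass X \<mu> - mass X \<nu>\<bar>" by (rule K.UU_root[OF I])
    have "K.cost \<pi> + C powr p / 2 * K.UU \<pi> =
      (K.cost \<pi> + K.cc * height X d q L 0 powr p * K.UU \<pi>) +
      (C powr p / 2 - 2 powr (p - 1) * height X d q L 0 powr p) * \<bar>mass X \<mu> - mass X \<nu>\<bar>"
      unfolding u K.cc_def by (simp add: algebra_simps)
    then show "KR X d p C \<mu> \<nu> powr p \<le>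
              (C powr p / 2 - 2 powr (p - 1) * height X d q L 0 powr p)
                * \<bar>mass X \<mu> - mass X \<nu>\<bar>
              + Bterm X d q p L Q par \<mu> \<nu> 1" using a b by linarith
  qed
  have P2: "\<forall>l\<in>{1..L}. 2 * height X d q L l \<le> C \<and> C < 2 * height X d q L (l - 1) \<longrightarrow>
            KR X d p C \<mu> \<nu> powr p \<le> Bterm X d q p L Q par \<mu> \<nu> l"
  proof (intro ballI impI)
    fix l assume l: "l \<in> {1..L}" and Cl: "2 * height X d q L l \<le> C \<and> C < 2 * height X d q L (l - 1)"
    obtain \<pi> where I: "K.Inv l \<pi>" using K.all_levels[of "L+1-l"] l by auto
    have a: "KR X d p C \<mu> \<nu> powr p \<le> K.cost \<pi> + C powr p / 2 * K.UU \<pi>"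
      by (rule K.KR_le[OF assms(6) I])
    have b: "K.cost \<pi> + K.cc * height X d q L (l-1) powr p * K.UU \<pi> \<le> Bterm X d q p L Q par \<mu> \<nu> l"
      by (rule K.L1[OF I]) (use l in auto)
    have "C powr p \<le> (2 * height X d q L (l-1)) powr p"
      using Cl assms(6) p0 by (intro powr_mono2) auto
    then have "C powr p / 2 \<le> K.cc * height X d q L (l-1) powr p" unfolding K.two_cc by simp
    then have "C powr p / 2 * K.UU \<pi> \<le> K.cc * height X d q L (l-1) powr p * K.UU \<pi>"
      using K.UU_nn[OF I] by (rule mult_right_mono)
    then show "KR X d p C \<mu> \<nu> powr p \<le> Bterm X d q p L Q par \<mu> \<nu> l" using a b by linarith
  qed
  have P3: "C \<le> max (2 * height X d q L L) (min_sep X d) \<longrightarrow>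
            KR X d p C \<mu> \<nu> powr p \<le> C powr p / 2 * TV X \<mu> \<nu>"
    using K.KR_le[OF assms(6) K.base] K.cost_pi0 K.UU_pi0 by simp
  show ?thesis using P1 P2 P3 by blast
qed

end
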